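(* Let $m\geq1$ and $e\geq0$ with $m\equiv 2^e-1 \pmod{2^{e+1}}$ (i.e. $e$ is the length of the final block of consecutive ones in the binary expansion of $m$; $e=0$ iff $m$ is even). Then $G(m)\leq 2^e-1$, with equality if $m$ is even or if $m=2^e-1$. In fact $G(m,s)\leq 2^e-1$ for all $s\geq\max\{(m+1)/2^e,2\}$. Specifically, if $m>2^e-1$ and $\sigma=(m+1)/2^e$ (an integer greater than $2$), then the product of $\sigma$-th zero-divisors $$(x_1+x_\sigma)^{m+2^e}(x_2+x_\sigma)^{m+2^e}\cdots(x_{\sigma-1}+x_\sigma)^{m+2^e}\in H^*((\mathbb{R}\mathrm{P}^m)^{\times\sigma};\mathbb{Z}_2)$$ is nonzero.
   Context: $H^*((\mathbb{R}\mathrm{P}^m)^{\times s};\mathbb{Z}_2)=\mathbb{Z}_2[x_1,\ldots,x_s]/(x_i^{m+1})$ with $x_i$ the pullback of the generator of $H^1(\mathbb{R}\mathrm{P}^m;\mathbb{Z}_2)$ under the $i$-th projection. The $s$-th zero-divisors are the elements of the kernel of the map $\Delta_s^*$ induced by the diagonal $\mathbb{R}\mathrm{P}^m\to(\mathbb{R}\mathrm{P}^m)^{\times s}$, and $\operatorname{zcl}_s(\mathbb{R}\mathrm{P}^m)$ is the maximal number of $s$-th zero-divisors with nonzero product. $G(m,s)=sm-\operatorname{zcl}_s(\mathbb{R}\mathrm{P}^m)$; the sequence $G(m,2)\geq G(m,3)\geq\cdots\geq0$ is non-increasing, and $G(m)$ denotes its eventual (stable) value. *)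

theory Defs
  imports Complex_Main "HOL-Library.Z2"
begin

text \<open>Model of H^*((RP^m)^s; Z_2) = Z_2[x_1,...,x_s]/(x_i^(m+1)).
  A monomial x_1^(a 1) ... x_s^(a s) is an exponent function a :: nat => nat
  with a i <= m for all i and a i = 0 for i outside {1..s}.
  An element of the ring is a Z_2-valued (type bit) coefficient function on
  monomials, vanishing outside the set of admissible monomials.\<close>

definition mono_set :: "nat \<Rightarrow> nat \<Rightarrow> (nat \<Rightarrow> nat) set" where
  "mono_set m s = {a. (\<forall>i. a i \<le> m) \<and> (\<forall>i. i \<notin> {1..s} \<longrightarrow> a i = 0)}"

type_synonym tpoly = "(nat \<Rightarrow> nat) \<Rightarrow> bit"

definition tp_elem :: "nat \<Rightarrow> nat \<Rightarrow> tpoly \<Rightarrow> bool" where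
  "tp_elem m s f \<longleftrightarrow> (\<forall>a. a \<notin> mono_set m s \<longrightarrow> f a = 0)"

definition tp_zero :: tpoly where
  "tp_zero = (\<lambda>_. 0)"

definition tp_one :: tpoly where
  "tp_one = (\<lambda>a. if a = (\<lambda>_. 0) then 1 else 0)"

text \<open>the generator x_i (pullback of the generator of H^1(RP^m) under the i-th projection)\<close>
definition tp_var :: "nat \<Rightarrow> tpoly" where
  "tp_var i = (\<lambda>a. if a = (\<lambda>j. if j = i then 1 else 0) then 1 else 0)"

definition tp_add :: "tpoly \<Rightarrow> tpoly \<Rightarrow> tpoly" where
  "tp_add f g = (\<lambda>a. f a + g a)"

definition tp_mult :: "nat \<Rightarrow> nat \<Rightarrow> tpoly \<Rightarrow> tpoly \<Rightarrow> tpoly" where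
  "tp_mult m s f g = (\<lambda>c. if c \<in> mono_set m s then
      (\<Sum>a\<in>mono_set m s. \<Sum>b\<in>mono_set m s.
          if (\<lambda>i. a i + b i) = c then f a * g b else 0)
    else 0)"

definition tp_pow :: "nat \<Rightarrow> nat \<Rightarrow> tpoly \<Rightarrow> nat \<Rightarrow> tpoly" where
  "tp_pow m s f k = ((tp_mult m s f) ^^ k) tp_one"

definition tp_prod :: "nat \<Rightarrow> nat \<Rightarrow> tpoly list \<Rightarrow> tpoly" where
  "tp_prod m s fs = foldr (tp_mult m s) fs tp_one"

text \<open>The map induced by the diagonal RP^m -> (RP^m)^s, x_i |-> x; the result is the
  coefficient function of an element of H^*(RP^m;Z_2) = Z_2[x]/(x^(m+1)).\<close>
definition diag :: "nat \<Rightarrow> nat \<Rightarrow> tpoly \<Rightarrow> (nat \<Rightarrow> bit)" where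
  "diag m s f = (\<lambda>d. if d \<le> m then
      (\<Sum>a\<in>mono_set m s. if (\<Sum>i\<in>{1..s}. a i) = d then f a else 0) else 0)"

definition zero_divisor :: "nat \<Rightarrow> nat \<Rightarrow> tpoly \<Rightarrow> bool" where
  "zero_divisor m s f \<longleftrightarrow> tp_elem m s f \<and> diag m s f = (\<lambda>_. 0)"

definition zcl :: "nat \<Rightarrow> nat \<Rightarrow> nat" where
  "zcl m s = (GREATEST k. \<exists>fs. length fs = k \<and> (\<forall>f\<in>set fs. zero_divisor m s f)
                                 \<and> tp_prod m s fs \<noteq> tp_zero)"

definition G :: "nat \<Rightarrow> nat \<Rightarrow> nat" where
  "G m s = s * m - zcl m s"

definition G_stable :: "nat \<Rightarrow> nat" where
  "G_stable m = (THE g. \<forall>\<^sub>F s in sequentially. G m s = g)"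

end

theory Submission
  imports Defs "HOL-Library.FuncSet" "HOL-Library.Poly_Mapping"
begin


declare add_bit_eq_xor[simp del] mult_bit_eq_and[simp del]

lemma bit_mult_eq_1 [simp]: "(x * y = (1::bit)) \<longleftrightarrow> x = 1 \<and> y = 1"
  by (cases x; cases y) simp_all

abbreviation deg :: "nat \<Rightarrow> (nat \<Rightarrow> nat) \<Rightarrow> nat" where
  "deg s a \<equiv> (\<Sum>i\<in>{1..s}. a i)"

lemma mono_set_finite: "finite (mono_set m s)"
proof -
  have "mono_set m s \<subseteq> (\<lambda>f i. if i \<in> {1..s} then f i else 0) ` (PiE {1..s} (\<lambda>_. {..m}))"
  proof
    fix a assume a: "a \<in> mono_set m s"
    have "a = (\<lambda>i. if i \<in> {1..s} then restrict a {1..s} i else 0)"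
      using a by (auto simp: mono_set_def fun_eq_iff)
    moreover have "restrict a {1..s} \<in> PiE {1..s} (\<lambda>_. {..m})"
      using a by (auto simp: mono_set_def)
    ultimately show "a \<in> (\<lambda>f i. if i \<in> {1..s} then f i else 0) ` (PiE {1..s} (\<lambda>_. {..m}))"
      by blast
  qed
  moreover have "finite (PiE {1..s} (\<lambda>_. {..m::nat}))" by (simp add: finite_PiE)
  ultimately show ?thesis using finite_surj by blast
qed

lemma tp_mult_nz:
  assumes "tp_mult m s f g c \<noteq> 0"
  shows "c \<in> mono_set m s \<and> (\<exists>a\<in>mono_set m s. \<exists>b\<in>mono_set m s. (\<lambda>i. a i + b i) = c \<and> f a \<noteq> 0 \<and> g b \<noteq> 0)"
proof -
  have c: "c \<in> mono_set m s" using assms by (auto simp: tp_mult_def split: if_splits)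
  then have "(\<Sum>a\<in>mono_set m s. \<Sum>b\<in>mono_set m s.
          if (\<lambda>i. a i + b i) = c then f a * g b else 0) \<noteq> 0" using assms by (simp add: tp_mult_def)
  then obtain a where a: "a \<in> mono_set m s" and s1: "(\<Sum>b\<in>mono_set m s.
          if (\<lambda>i. a i + b i) = c then f a * g b else 0) \<noteq> 0"
    by (rule sum.not_neutral_contains_not_neutral)
  from s1 obtain b where b: "b \<in> mono_set m s" and s2: "(if (\<lambda>i. a i + b i) = c then f a * g b else 0) \<noteq> 0"
    by (rule sum.not_neutral_contains_not_neutral)
  from s2 have "(\<lambda>i. a i + b i) = c" "f a \<noteq> 0" "g b \<noteq> 0" by (auto split: if_splits)
  with a b c show ?thesis by blast
qed

lemma tp_mult_single:
  assumes c: "c \<in> mono_set m s" and a0: "a0 \<in> mono_set m s" and b0: "b0 \<in> mono_set m s"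
    and ab: "(\<lambda>i. a0 i + b0 i) = c"
    and uniq: "\<And>a b. a \<in> mono_set m s \<Longrightarrow> b \<in> mono_set m s \<Longrightarrow> (\<lambda>i. a i + b i) = c
                 \<Longrightarrow> f a \<noteq> 0 \<Longrightarrow> g b \<noteq> 0 \<Longrightarrow> a = a0"
  shows "tp_mult m s f g c = f a0 * g b0"
proof -
  have eq: "(if (\<lambda>i. a i + b i) = c then f a * g b else 0) = (if a = a0 \<and> b = b0 then f a0 * g b0 else 0)"
    if "a \<in> mono_set m s" "b \<in> mono_set m s" for a b
  proof (cases "(\<lambda>i. a i + b i) = c")
    case True
    show ?thesis
    proof (cases "a = a0")
      case True
      have "b = b0"
      proof (rule ext)
        fix i
        have "a i + b i = c i" "a0 i + b0 i = c i"
          using fun_cong[OF \<open>(\<lambda>i. a i + b i) = c\<close>, of i] fun_cong[OF ab, of i] by auto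
        then show "b i = b0 i" using True by simp
      qed
      then show ?thesis using True \<open>(\<lambda>i. a i + b i) = c\<close> by simp
    next
      case False
      then have "f a = 0 \<or> g b = 0" using uniq[OF that \<open>(\<lambda>i. a i + b i) = c\<close>] by blast
      with False True show ?thesis by auto
    qed
  next
    case False
    then have "\<not> (a = a0 \<and> b = b0)" using ab by auto
    show ?thesis by (subst if_not_P[OF False], subst if_not_P[OF \<open>\<not> (a = a0 \<and> b = b0)\<close>], rule refl)
  qed
  have "tp_mult m s f g c = (\<Sum>a\<in>mono_set m s. \<Sum>b\<in>mono_set m s. if a = a0 \<and> b = b0 then f a0 * g b0 else 0)"
    using c by (simp add: tp_mult_def eq cong: sum.cong)
  also have "\<dots> = (\<Sum>a\<in>mono_set m s. if a = a0 then f a0 * g b0 else 0)"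
    by (rule sum.cong) (use b0 mono_set_finite in auto)
  also have "\<dots> = f a0 * g b0" using a0 mono_set_finite by simp
  finally show ?thesis .
qed

lemma if_add0: "(if P then (x::'a::comm_monoid_add) + y else 0) = (if P then x else 0) + (if P then y else 0)"
  by simp

lemma tp_mult_add_left:
  "tp_mult m s (tp_add f g) h = tp_add (tp_mult m s f h) (tp_mult m s g h)"
proof (rule ext)
  fix c
  show "tp_mult m s (tp_add f g) h c = tp_add (tp_mult m s f h) (tp_mult m s g h) c"
  proof (cases "c \<in> mono_set m s")
    case True
    have "\<And>a b. (if (\<lambda>i. a i + b i) = c then (f a + g a) * h b else 0) =
       (if (\<lambda>i. a i + b i) = c then f a * h b else 0) + (if (\<lambda>i. a i + b i) = c then g a * h b else 0)"
      by (simp add: distrib_right)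
    then show ?thesis using True by (simp add: sum.distrib tp_mult_def tp_add_def)
  qed (simp add: tp_mult_def tp_add_def)
qed

definition ev :: "nat \<Rightarrow> nat \<Rightarrow> nat" where "ev i = (\<lambda>j. if j = i then 1 else 0)"

lemma tp_var_eq: "tp_var i a = (if a = ev i then 1 else 0)"
  by (simp add: tp_var_def ev_def)

lemma ev_mem: "i \<in> {1..s} \<Longrightarrow> 1 \<le> m \<Longrightarrow> ev i \<in> mono_set m s"
  by (auto simp: ev_def mono_set_def)

lemma tp_mult_var:
  assumes i: "i \<in> {1..s}" and m: "1 \<le> m" and c: "c \<in> mono_set m s"
  shows "tp_mult m s (tp_var i) F c = (if c i \<ge> 1 then F (c(i := c i - 1)) else 0)"
proof (cases "c i \<ge> 1")
  case True
  have b0: "c(i := c i - 1) \<in> mono_set m s" using c i unfolding mono_set_def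
    by (simp add: le_trans[OF diff_le_self])
  have sum: "(\<lambda>j. ev i j + (c(i := c i - 1)) j) = c"
  proof (rule ext)
    fix j show "ev i j + (c(i := c i - 1)) j = c j" using True by (cases "j = i") (simp_all add: ev_def)
  qed
  have "tp_mult m s (tp_var i) F c = tp_var i (ev i) * F (c(i := c i - 1))"
    by (rule tp_mult_single[OF c ev_mem[OF i m] b0 sum]) (simp add: tp_var_eq split: if_splits)
  with True show ?thesis by (simp add: tp_var_eq)
next
  case False
  have z: "tp_mult m s (tp_var i) F c = 0"
  proof (rule ccontr)
    assume "tp_mult m s (tp_var i) F c \<noteq> 0"
    from tp_mult_nz[OF this] obtain a b where ab: "(\<lambda>j. a j + b j) = c" and "tp_var i a \<noteq> 0" by blast
    then have "a = ev i" by (simp add: tp_var_eq split: if_splits)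
    moreover have "c i = a i + b i" using fun_cong[OF ab, of i] by simp
    ultimately show False using False by (simp add: ev_def)
  qed
  show ?thesis by (subst if_not_P[OF False]) (rule z)
qed



lemma choose_odd_iff:
  "odd (n choose k) \<longleftrightarrow> \<not> (odd k \<and> even n) \<and> odd ((n div 2) choose (k div 2))"
proof (induction n arbitrary: k)
  case 0
  then show ?case
  proof (cases k)
    case (Suc k')
    then show ?thesis by (cases k') auto
  qed simp
next
  case (Suc n)
  show ?case
  proof (cases k)
    case 0
    then show ?thesis by simp
  next
    case (Suc k')
    have C: "Suc n choose Suc k' = (n choose k') + (n choose Suc k')" by simp
    have I1: "odd (n choose k') \<longleftrightarrow> \<not> (odd k' \<and> even n) \<and> odd ((n div 2) choose (k' div 2))"
      by (rule Suc.IH)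
    have I2: "odd (n choose Suc k') \<longleftrightarrow> \<not> (odd (Suc k') \<and> even n) \<and> odd ((n div 2) choose (Suc k' div 2))"
      by (rule Suc.IH)
    show ?thesis
    proof (cases "even n")
      case True
      then obtain a where n: "n = 2 * a" by blast
      show ?thesis
      proof (cases "even k'")
        case True
        then obtain b where k: "k' = 2 * b" by blast
        have d: "n div 2 = a" "k' div 2 = b" "Suc k' div 2 = b" "Suc n div 2 = a" using n k by auto
        have p: "odd k'  \<longleftrightarrow> False" "even n" "odd (Suc k')" "\<not> even (Suc n)" using n k by auto
        show ?thesis using I1 I2 unfolding C \<open>k = Suc k'\<close> d
          by (simp only: even_add p simp_thms)
      next
        case False
        then obtain b where k: "k' = 2 * b + 1" using oddE by blast
        have d: "n div 2 = a" "k' div 2 = b" "Suc k' div 2 = Suc b" "Suc n div 2 = a" using n k by auto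
        have p: "odd k'" "even n" "\<not> odd (Suc k')" "\<not> even (Suc n)" using n k by auto
        show ?thesis using I1 I2 unfolding C \<open>k = Suc k'\<close> d
          by (simp only: even_add p simp_thms)
      qed
    next
      case False
      then obtain a where n: "n = 2 * a + 1" using oddE by blast
      show ?thesis
      proof (cases "even k'")
        case True
        then obtain b where k: "k' = 2 * b" by blast
        have d: "n div 2 = a" "k' div 2 = b" "Suc k' div 2 = b" "Suc n div 2 = Suc a" using n k by auto
        have p: "\<not> odd k'" "\<not> even n" "odd (Suc k')" "even (Suc n)" using n k by auto
        show ?thesis using I1 I2 unfolding C \<open>k = Suc k'\<close> d
          by (simp only: even_add p simp_thms)
      next
        case False
        then obtain b where k: "k' = 2 * b + 1" using oddE by blast
        have d: "n div 2 = a" "k' div 2 = b" "Suc k' div 2 = Suc b" "Suc n div 2 = Suc a" using n k by auto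
        have p: "odd k'" "\<not> even n" "\<not> odd (Suc k')" "even (Suc n)" using n k by auto
        have C2: "Suc a choose Suc b = (a choose b) + (a choose Suc b)" by simp
        show ?thesis using I1 I2 unfolding C C2 \<open>k = Suc k'\<close> d
          by (simp only: even_add p simp_thms)
      qed
    qed
  qed
qed

lemma choose_pow2_odd: "odd (n div 2 ^ e) \<Longrightarrow> odd (n choose 2 ^ e)"
proof (induction e arbitrary: n)
  case 0
  then show ?case by simp
next
  case (Suc e)
  have "odd ((n div 2) choose 2 ^ e)"
    using Suc.IH[of "n div 2"] Suc.prems by (simp add: div_mult2_eq)
  then show ?case by (subst choose_odd_iff) simp
qed

lemma tp_pow_0: "tp_pow m s f 0 = tp_one" by (simp add: tp_pow_def)
lemma tp_pow_Suc: "tp_pow m s f (Suc n) = tp_mult m s f (tp_pow m s f n)" by (simp add: tp_pow_def)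

lemma zero_mem: "(\<lambda>_. 0) \<in> mono_set m s" by (simp add: mono_set_def)

lemma tp_add_var_nz: "tp_add (tp_var i) (tp_var j) u \<noteq> 0 \<Longrightarrow> u = ev i \<or> u = ev j"
  by (auto simp: tp_add_def tp_var_eq split: if_splits)

lemma tp_pow_supp:
  assumes "i \<noteq> j"
  shows "tp_pow m s (tp_add (tp_var i) (tp_var j)) n a \<noteq> 0 \<Longrightarrow>
     a \<in> mono_set m s \<and> (\<forall>t. t \<noteq> i \<and> t \<noteq> j \<longrightarrow> a t = 0) \<and> a i + a j = n"
proof (induction n arbitrary: a)
  case 0
  then have "a = (\<lambda>_. 0)" by (simp add: tp_pow_0 tp_one_def split: if_splits)
  then show ?case by (simp add: zero_mem)
next
  case (Suc n)
  from tp_mult_nz[OF Suc.prems[unfolded tp_pow_Suc]] obtain u v where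
    a: "a \<in> mono_set m s" and uv: "(\<lambda>t. u t + v t) = a"
    and u: "tp_add (tp_var i) (tp_var j) u \<noteq> 0"
    and v: "tp_pow m s (tp_add (tp_var i) (tp_var j)) n v \<noteq> 0" by blast
  from Suc.IH[OF v] have v1: "\<forall>t. t \<noteq> i \<and> t \<noteq> j \<longrightarrow> v t = 0" "v i + v j = n" by auto
  from tp_add_var_nz[OF u] have "u = ev i \<or> u = ev j" .
  then show ?case using a v1 assms uv[symmetric] by (auto simp: ev_def)
qed

definition E2 :: "nat \<Rightarrow> nat \<Rightarrow> nat \<Rightarrow> nat \<Rightarrow> nat \<Rightarrow> nat" where
  "E2 i j p q = (\<lambda>t. if t = i then p else if t = j then q else 0)"

lemma E2_mem: "i \<in> {1..s} \<Longrightarrow> j \<in> {1..s} \<Longrightarrow> p \<le> m \<Longrightarrow> q \<le> m \<Longrightarrow> E2 i j p q \<in> mono_set m s"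
  by (auto simp: E2_def mono_set_def)

lemma tp_pow_binom:
  assumes i: "i \<in> {1..s}" and j: "j \<in> {1..s}" and ij: "i \<noteq> j" and m: "1 \<le> m"
  shows "p \<le> m \<Longrightarrow> q \<le> m \<Longrightarrow> p + q = n \<Longrightarrow>
    tp_pow m s (tp_add (tp_var i) (tp_var j)) n (E2 i j p q) = of_nat (n choose p)"
proof (induction n arbitrary: p q)
  case 0
  then have "E2 i j p q = (\<lambda>_. 0)" by (auto simp: E2_def)
  then show ?case using 0 by (simp add: tp_pow_0 tp_one_def)
next
  case (Suc n)
  let ?F = "tp_pow m s (tp_add (tp_var i) (tp_var j)) n"
  have c: "E2 i j p q \<in> mono_set m s" using E2_mem[OF i j Suc.prems(1,2)] .
  have "tp_pow m s (tp_add (tp_var i) (tp_var j)) (Suc n) (E2 i j p q)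
     = tp_mult m s (tp_var i) ?F (E2 i j p q) + tp_mult m s (tp_var j) ?F (E2 i j p q)"
    by (simp only: tp_pow_Suc tp_mult_add_left) (simp add: tp_add_def)
  also have "\<dots> = (if p \<ge> 1 then ?F (E2 i j (p - 1) q) else 0) + (if q \<ge> 1 then ?F (E2 i j p (q - 1)) else 0)"
  proof -
    have "(E2 i j p q)(i := E2 i j p q i - 1) = E2 i j (p - 1) q"
      "(E2 i j p q)(j := E2 i j p q j - 1) = E2 i j p (q - 1)"
      "E2 i j p q i = p" "E2 i j p q j = q"
      using ij by (auto simp: E2_def fun_eq_iff)
    then show ?thesis by (simp add: tp_mult_var[OF i m c] tp_mult_var[OF j m c])
  qed
  also have "\<dots> = of_nat (Suc n choose p)"
  proof (cases p)
    case 0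
    then have "q = Suc n" using Suc.prems by simp
    then show ?thesis using Suc.IH[of 0 n] Suc.prems 0 by simp
  next
    case (Suc p')
    show ?thesis
    proof (cases q)
      case 0
      then have "p' = n" using Suc.prems \<open>p = Suc p'\<close> by simp
      then show ?thesis using Suc.IH[of n 0] Suc.prems \<open>p = Suc p'\<close> 0 by simp
    next
      case (Suc q')
      have "?F (E2 i j (p - 1) q) = of_nat (n choose p')"
        using Suc.IH[of p' q] Suc.prems \<open>p = Suc p'\<close> \<open>q = Suc q'\<close> by simp
      moreover have "?F (E2 i j p (q - 1)) = of_nat (n choose p)"
        using Suc.IH[of p q'] Suc.prems \<open>p = Suc p'\<close> \<open>q = Suc q'\<close> by simp
      ultimately show ?thesis using \<open>p = Suc p'\<close> \<open>q = Suc q'\<close> by simp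
    qed
  qed
  finally show ?case .
qed



lemma of_nat_bit: "(of_nat n :: bit) = (if even n then 0 else 1)"
  by (induction n) auto

lemma sum_two:
  assumes "finite A" "i \<in> A" "j \<in> A" "i \<noteq> j" "\<forall>t. t \<noteq> i \<and> t \<noteq> j \<longrightarrow> a t = 0"
  shows "sum a A = a i + a j"
proof -
  have "sum a A = sum a {i, j}"
    by (rule sum.mono_neutral_right) (use assms in auto)
  then show ?thesis using assms(4) by simp
qed

lemma tp_prod_Nil: "tp_prod m s [] = tp_one" by (simp add: tp_prod_def)
lemma tp_prod_Cons: "tp_prod m s (f # fs) = tp_mult m s f (tp_prod m s fs)" by (simp add: tp_prod_def)

lemma prod_supp_zero_at:
  "(\<forall>f\<in>set fs. \<forall>a. f a \<noteq> 0 \<longrightarrow> a t = 0) \<Longrightarrow> tp_prod m s fs a \<noteq> 0 \<Longrightarrow> a t = 0"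
proof (induction fs arbitrary: a)
  case Nil
  then show ?case by (simp add: tp_prod_Nil tp_one_def split: if_splits)
next
  case (Cons f fs)
  from tp_mult_nz[OF Cons.prems(2)[unfolded tp_prod_Cons]] obtain u v where
    "(\<lambda>i. u i + v i) = a" "f u \<noteq> 0" "tp_prod m s fs v \<noteq> 0" by blast
  moreover have "u t = 0" using Cons.prems(1) \<open>f u \<noteq> 0\<close> by simp
  moreover have "v t = 0" using Cons.IH Cons.prems(1) \<open>tp_prod m s fs v \<noteq> 0\<close> by simp
  ultimately show ?case by auto
qed

lemma zd_pow:
  assumes i: "i \<in> {1..s}" and ins: "i \<noteq> s" and k: "m < k" and s: "1 \<le> s"
  shows "zero_divisor m s (tp_pow m s (tp_add (tp_var i) (tp_var s)) k)"
proof -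
  let ?f = "tp_pow m s (tp_add (tp_var i) (tp_var s)) k"
  have el: "tp_elem m s ?f" unfolding tp_elem_def using tp_pow_supp[OF ins] by blast
  have "diag m s ?f d = 0" for d
  proof (cases "d \<le> m")
    case True
    have "(if deg s a = d then ?f a else 0) = 0" if a: "a \<in> mono_set m s" for a
    proof (cases "?f a = 0")
      case False
      from tp_pow_supp[OF ins False] have h: "\<forall>t. t \<noteq> i \<and> t \<noteq> s \<longrightarrow> a t = 0" "a i + a s = k" by auto
      have "deg s a = a i + a s" by (rule sum_two) (use i s ins h in auto)
      then show ?thesis using h k True by simp
    qed simp
    then show ?thesis using True by (simp add: diag_def)
  qed (simp add: diag_def)
  then show ?thesis using el by (simp add: zero_divisor_def fun_eq_iff)
qed

lemma odd_choose_main: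
  assumes "m + 1 = \<sigma> * 2 ^ e" "odd \<sigma>"
  shows "odd ((m + 2 ^ e) choose m)"
proof -
  have P: "(2::nat) ^ e \<ge> 1" by simp
  have e1: "m + 2 ^ e = (2 ^ e - 1) + \<sigma> * 2 ^ e" using assms(1) P by linarith
  have "(m + 2 ^ e) div 2 ^ e = ((2 ^ e - 1) + \<sigma> * 2 ^ e) div 2 ^ e" by (simp only: e1)
  also have "\<dots> = \<sigma> + (2 ^ e - 1) div 2 ^ e" by (rule div_mult_self1) simp
  also have "(2 ^ e - 1) div 2 ^ e = (0::nat)" by (rule div_less) simp
  finally have "(m + 2 ^ e) div 2 ^ e = \<sigma>" by simp
  then have "odd ((m + 2 ^ e) choose 2 ^ e)" using choose_pow2_odd assms(2) by simp
  moreover have "(m + 2 ^ e) choose m = (m + 2 ^ e) choose 2 ^ e"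
    using binomial_symmetric[of m "m + 2 ^ e"] by simp
  ultimately show ?thesis by simp
qed

lemma main_prod:
  assumes sig: "m + 1 = \<sigma> * 2 ^ e" and P: "2 ^ e \<le> m" and odd: "odd \<sigma>"
  shows "1 \<le> j \<Longrightarrow> j \<le> \<sigma> \<Longrightarrow>
    tp_prod m \<sigma> (map (\<lambda>i. tp_pow m \<sigma> (tp_add (tp_var i) (tp_var \<sigma>)) (m + 2 ^ e)) [j..<\<sigma>])
       (\<lambda>t. if j \<le> t \<and> t < \<sigma> then m else if t = \<sigma> then (\<sigma> - j) * 2 ^ e else 0) = 1"
proof (induction "\<sigma> - j" arbitrary: j)
  case 0
  then have "j = \<sigma>" by simp
  then show ?case by (auto simp: tp_prod_Nil tp_one_def fun_eq_iff)
next
  case (Suc x)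
  let ?g = "\<lambda>i. tp_pow m \<sigma> (tp_add (tp_var i) (tp_var \<sigma>)) (m + 2 ^ e)"
  let ?c = "\<lambda>j t. if j \<le> t \<and> t < \<sigma> then m else if t = \<sigma> then (\<sigma> - j) * 2 ^ e else 0"
  have j: "1 \<le> j" "j < \<sigma>" using Suc by auto
  have IH: "tp_prod m \<sigma> (map ?g [Suc j..<\<sigma>]) (?c (Suc j)) = 1"
    using Suc.hyps(1)[of "Suc j"] Suc.hyps(2) j by simp
  have Pge: "(2::nat) ^ e \<ge> 1" by simp
  have cmem: "?c j' \<in> mono_set m \<sigma>" if "1 \<le> j'" "j' \<le> \<sigma>" for j'
  proof -
    have "(\<sigma> - j') * 2 ^ e \<le> (\<sigma> - 1) * 2 ^ e" using that by (intro mult_right_mono) auto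
    also have "\<dots> = \<sigma> * 2 ^ e - 2 ^ e" by (simp add: diff_mult_distrib)
    also have "\<dots> \<le> m" using sig Pge by linarith
    finally have "(\<sigma> - j') * 2 ^ e \<le> m" .
    then show ?thesis using that unfolding mono_set_def by auto
  qed
  have sj: "[j..<\<sigma>] = j # [Suc j..<\<sigma>]" using j upt_conv_Cons by blast
  have a0: "E2 j \<sigma> m (2 ^ e) \<in> mono_set m \<sigma>" by (rule E2_mem) (use j P in auto)
  have sum_eq: "(\<lambda>t. E2 j \<sigma> m (2 ^ e) t + ?c (Suc j) t) = ?c j"
  proof (rule ext)
    fix t
    have "\<sigma> - j = Suc (\<sigma> - Suc j)" using j by simp
    then show "E2 j \<sigma> m (2 ^ e) t + ?c (Suc j) t = ?c j t"
      using j by (auto simp: E2_def)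
  qed
  have "tp_prod m \<sigma> (map ?g [j..<\<sigma>]) (?c j) = tp_mult m \<sigma> (?g j) (tp_prod m \<sigma> (map ?g [Suc j..<\<sigma>])) (?c j)"
    by (simp add: sj tp_prod_Cons)
  also have "\<dots> = ?g j (E2 j \<sigma> m (2 ^ e)) * tp_prod m \<sigma> (map ?g [Suc j..<\<sigma>]) (?c (Suc j))"
  proof (rule tp_mult_single[OF cmem[OF j(1)] a0 cmem sum_eq])
    show "1 \<le> Suc j" "Suc j \<le> \<sigma>" using j by auto
  next
    fix a b
    assume ab: "(\<lambda>i. a i + b i) = ?c j" and ga: "?g j a \<noteq> 0" and gb: "tp_prod m \<sigma> (map ?g [Suc j..<\<sigma>]) b \<noteq> 0"
    have jne: "j \<noteq> \<sigma>" using j by simp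
    from tp_pow_supp[OF jne ga] have ha: "\<forall>t. t \<noteq> j \<and> t \<noteq> \<sigma> \<longrightarrow> a t = 0" "a j + a \<sigma> = m + 2 ^ e" by auto
    have "b j = 0"
    proof (rule prod_supp_zero_at[OF _ gb], intro ballI allI impI)
      fix f a' assume "f \<in> set (map ?g [Suc j..<\<sigma>])" "f a' \<noteq> 0"
      then obtain i where i: "i \<in> {Suc j..<\<sigma>}" "f = ?g i" by auto
      then have "i \<noteq> \<sigma>" by simp
      from tp_pow_supp[OF this] \<open>f a' \<noteq> 0\<close> i show "a' j = 0" by auto
    qed
    moreover have "a j + b j = m" using fun_cong[OF ab, of j] j by simp
    ultimately have "a j = m" "a \<sigma> = 2 ^ e" using ha by auto
    then show "a = E2 j \<sigma> m (2 ^ e)" using ha jne by (auto simp: E2_def fun_eq_iff)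
  qed (use j in auto)
  also have "\<dots> = 1"
  proof -
    have "?g j (E2 j \<sigma> m (2 ^ e)) = of_nat ((m + 2 ^ e) choose m)"
      by (rule tp_pow_binom) (use j P le_trans[OF Pge P] in auto)
    also have "\<dots> = 1" using odd_choose_main[OF sig odd] by (simp add: of_nat_bit)
    finally show ?thesis using IH by simp
  qed
  finally show ?case .
qed



definition ZP :: "nat \<Rightarrow> nat \<Rightarrow> nat \<Rightarrow> bool" where
  "ZP m s k \<longleftrightarrow> (\<exists>fs. length fs = k \<and> (\<forall>f\<in>set fs. zero_divisor m s f) \<and> tp_prod m s fs \<noteq> tp_zero)"

lemma zcl_ZP: "zcl m s = Greatest (ZP m s)"
  unfolding zcl_def ZP_def[abs_def] by (rule refl)

lemma deg_zero: "a \<in> mono_set m s \<Longrightarrow> deg s a = 0 \<Longrightarrow> a = (\<lambda>_. 0)"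
  by (auto simp: mono_set_def fun_eq_iff)

lemma deg_zero_iff: "a \<in> mono_set m s \<Longrightarrow> deg s a = 0 \<longleftrightarrow> a = (\<lambda>_. 0)"
  using deg_zero by auto

lemma zd_const: assumes "zero_divisor m s f" shows "f (\<lambda>_. 0) = 0"
proof -
  have "diag m s f 0 = 0" using assms by (simp add: zero_divisor_def)
  moreover have "diag m s f 0 = (\<Sum>a\<in>mono_set m s. if deg s a = 0 then f a else 0)"
    by (simp only: diag_def if_True le0)
  moreover have "\<dots> = (\<Sum>a\<in>mono_set m s. if a = (\<lambda>_. 0) then f a else 0)"
    by (rule sum.cong[OF refl], subst deg_zero_iff, assumption, rule refl)
  moreover have "\<dots> = f (\<lambda>_. 0)" using mono_set_finite zero_mem by simp
  ultimately show ?thesis by simp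
qed

lemma prod_deg:
  "(\<forall>f\<in>set fs. zero_divisor m s f) \<Longrightarrow> tp_prod m s fs a \<noteq> 0 \<Longrightarrow> a \<in> mono_set m s \<and> length fs \<le> deg s a"
proof (induction fs arbitrary: a)
  case Nil
  then have "a = (\<lambda>_. 0)" by (simp add: tp_prod_Nil tp_one_def split: if_splits)
  then show ?case by (simp add: zero_mem)
next
  case (Cons f fs)
  from tp_mult_nz[OF Cons.prems(2)[unfolded tp_prod_Cons]] obtain u v where
    a: "a \<in> mono_set m s" and u: "u \<in> mono_set m s" and uv: "(\<lambda>i. u i + v i) = a"
    and fu: "f u \<noteq> 0" and v: "tp_prod m s fs v \<noteq> 0" by blast
  have "u \<noteq> (\<lambda>_. 0)"
  proof
    assume "u = (\<lambda>_. 0)"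
    moreover have "f (\<lambda>_. 0) = 0" using zd_const[of m s f] Cons.prems(1) by simp
    ultimately show False using fu by simp
  qed
  then have "deg s u \<ge> 1" using deg_zero[OF u] by (cases "deg s u") auto
  moreover have "length fs \<le> deg s v" using Cons.IH Cons.prems(1) v by simp
  moreover have "deg s a = deg s u + deg s v" using uv[symmetric] by (simp add: sum.distrib)
  ultimately show ?case using a by simp
qed

lemma deg_le: "a \<in> mono_set m s \<Longrightarrow> deg s a \<le> s * m"
  using sum_bounded_above[of "{1..s}" a m] by (auto simp: mono_set_def)

lemma ZP_bound: "ZP m s k \<Longrightarrow> k \<le> s * m"
proof -
  assume "ZP m s k"
  then obtain fs where fs: "length fs = k" "\<forall>f\<in>set fs. zero_divisor m s f" "tp_prod m s fs \<noteq> tp_zero"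
    by (auto simp: ZP_def)
  then obtain a where "tp_prod m s fs a \<noteq> 0" by (auto simp: tp_zero_def fun_eq_iff)
  from prod_deg[OF fs(2) this] have "a \<in> mono_set m s" "k \<le> deg s a" using fs(1) by auto
  then show ?thesis using deg_le by (meson le_trans)
qed

lemma ZP_0: "ZP m s 0"
  unfolding ZP_def by (rule exI[of _ "[]"]) (auto simp: tp_prod_Nil tp_one_def tp_zero_def fun_eq_iff)

lemma zcl_is_ZP: "ZP m s (zcl m s)"
  unfolding zcl_ZP by (rule GreatestI_nat[of "ZP m s" 0 "s * m"]) (use ZP_0 ZP_bound in auto)

lemma zcl_ge: "ZP m s k \<Longrightarrow> k \<le> zcl m s"
  unfolding zcl_ZP by (rule Greatest_le_nat[of "ZP m s" k "s * m"]) (use ZP_bound in auto)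

lemma zcl_le: "zcl m s \<le> s * m"
  using ZP_bound[OF zcl_is_ZP] .

lemma mono_set_Suc: "mono_set m s \<subseteq> mono_set m (Suc s)"
  by (auto simp: mono_set_def)

lemma elem_Suc: "tp_elem m s f \<Longrightarrow> tp_elem m (Suc s) f"
  using mono_set_Suc by (auto simp: tp_elem_def)

lemma mem_Suc_deg: "a \<in> mono_set m s \<Longrightarrow> deg (Suc s) a = deg s a"
  by (simp add: mono_set_def)

lemma diag_Suc:
  assumes "tp_elem m s f" shows "diag m (Suc s) f = diag m s f"
proof (rule ext)
  fix d
  have "(\<Sum>a\<in>mono_set m (Suc s). if deg (Suc s) a = d then f a else 0)
      = (\<Sum>a\<in>mono_set m s. if deg (Suc s) a = d then f a else 0)"
    by (rule sum.mono_neutral_right) (use mono_set_finite mono_set_Suc assms in \<open>auto simp: tp_elem_def\<close>)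
  also have "\<dots> = (\<Sum>a\<in>mono_set m s. if deg s a = d then f a else 0)"
    by (rule sum.cong[OF refl], subst mem_Suc_deg, assumption, rule refl)
  finally show "diag m (Suc s) f d = diag m s f d" by (simp add: diag_def)
qed

lemma mult_Suc:
  assumes f: "tp_elem m s f" and g: "tp_elem m s g"
  shows "tp_mult m (Suc s) f g = tp_mult m s f g"
proof (rule ext)
  fix c
  show "tp_mult m (Suc s) f g c = tp_mult m s f g c"
  proof (cases "c \<in> mono_set m s")
    case True
    have "(\<Sum>a\<in>mono_set m (Suc s). \<Sum>b\<in>mono_set m (Suc s). if (\<lambda>i. a i + b i) = c then f a * g b else 0)
        = (\<Sum>a\<in>mono_set m s. \<Sum>b\<in>mono_set m (Suc s). if (\<lambda>i. a i + b i) = c then f a * g b else 0)"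
      by (rule sum.mono_neutral_right) (use mono_set_finite mono_set_Suc f in \<open>auto simp: tp_elem_def intro!: sum.neutral\<close>)
    also have "\<dots> = (\<Sum>a\<in>mono_set m s. \<Sum>b\<in>mono_set m s. if (\<lambda>i. a i + b i) = c then f a * g b else 0)"
      by (rule sum.cong[OF refl], rule sum.mono_neutral_right)
         (use mono_set_finite mono_set_Suc g in \<open>auto simp: tp_elem_def\<close>)
    finally show ?thesis using True mono_set_Suc by (auto simp: tp_mult_def)
  next
    case False
    have "tp_mult m (Suc s) f g c = 0"
    proof (rule ccontr)
      assume "tp_mult m (Suc s) f g c \<noteq> 0"
      from tp_mult_nz[OF this] obtain a b where c: "c \<in> mono_set m (Suc s)" and ab: "(\<lambda>i. a i + b i) = c"
        and "f a \<noteq> 0" "g b \<noteq> 0" by blast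
      then have "a \<in> mono_set m s" "b \<in> mono_set m s" using f g by (auto simp: tp_elem_def)
      then have "c \<in> mono_set m s" using c ab[symmetric] by (auto simp: mono_set_def)
      with False show False by simp
    qed
    then show ?thesis using False by (simp add: tp_mult_def)
  qed
qed

lemma prod_elem: "tp_elem m s (tp_prod m s fs)"
  by (cases fs) (auto simp: tp_elem_def tp_prod_Nil tp_prod_Cons tp_one_def tp_mult_def zero_mem)

lemma prod_Suc:
  "(\<forall>f\<in>set fs. tp_elem m s f) \<Longrightarrow> tp_prod m (Suc s) fs = tp_prod m s fs"
proof (induction fs)
  case Nil
  then show ?case by (simp add: tp_prod_Nil)
next
  case (Cons f fs)
  then show ?case by (simp add: tp_prod_Cons mult_Suc prod_elem)
qed

lemma deg_ev: "i \<in> {1..s} \<Longrightarrow> deg s (ev i) = 1"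
proof -
  assume i: "i \<in> {1..s}"
  have "deg s (ev i) = (\<Sum>t\<in>{1..s}. if t = i then 1 else 0)" by (simp add: ev_def)
  also have "\<dots> = 1" using i by simp
  finally show ?thesis .
qed

lemma zd_h:
  assumes s: "1 \<le> s" and m: "1 \<le> m"
  shows "zero_divisor m (Suc s) (tp_add (tp_var 1) (tp_var (Suc s)))"
proof -
  let ?h = "tp_add (tp_var 1) (tp_var (Suc s))"
  have i1: "1 \<in> {1..Suc s}" and i2: "Suc s \<in> {1..Suc s}" by auto
  have el: "tp_elem m (Suc s) ?h"
    unfolding tp_elem_def using tp_add_var_nz ev_mem[OF i1 m] ev_mem[OF i2 m] by blast
  have "diag m (Suc s) ?h d = 0" for d
  proof -
    have "(\<Sum>a\<in>mono_set m (Suc s). if deg (Suc s) a = d then ?h a else 0)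
      = (\<Sum>a\<in>mono_set m (Suc s). if a = ev 1 then (if deg (Suc s) a = d then 1 else 0) else 0)
      + (\<Sum>a\<in>mono_set m (Suc s). if a = ev (Suc s) then (if deg (Suc s) a = d then 1 else 0) else 0)"
    proof -
      have ne: "ev 1 \<noteq> ev (Suc s)" using s by (auto simp: ev_def fun_eq_iff)
      have pt: "(if deg (Suc s) x = d then ?h x else 0) = (if x = ev 1 then (if deg (Suc s) x = d then 1 else 0) else 0)
         + (if x = ev (Suc s) then (if deg (Suc s) x = d then 1 else 0) else 0)" for x
        unfolding tp_add_def tp_var_eq using ne by auto
      show ?thesis by (simp only: pt sum.distrib)
    qed
    also have "\<dots> = (if d = 1 then 1 else 0) + (if d = 1 then 1 else 0)"
      using mono_set_finite ev_mem[OF i1 m] ev_mem[OF i2 m] deg_ev[OF i1] deg_ev[OF i2] by auto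
    also have "\<dots> = 0" by simp
    finally have X: "(\<Sum>a\<in>mono_set m (Suc s). if deg (Suc s) a = d then ?h a else 0) = 0" .
    show ?thesis unfolding diag_def by (subst X) simp
  qed
  then show ?thesis using el by (simp add: zero_divisor_def fun_eq_iff)
qed

lemma prod_replicate:
  "tp_prod m s (replicate n h @ fs) = (tp_mult m s h ^^ n) (tp_prod m s fs)"
  by (induction n) (simp_all add: tp_prod_Cons)

lemma ZP_Suc:
  assumes s: "1 \<le> s" and m: "1 \<le> m" and Z: "ZP m s k"
  shows "ZP m (Suc s) (k + m)"
proof -
  obtain fs where fs: "length fs = k" "\<forall>f\<in>set fs. zero_divisor m s f" "tp_prod m s fs \<noteq> tp_zero"
    using Z by (auto simp: ZP_def)
  let ?h = "tp_add (tp_var 1) (tp_var (Suc s))"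
  let ?Q = "tp_prod m s fs"
  have elfs: "\<forall>f\<in>set fs. tp_elem m s f" using fs(2) by (simp add: zero_divisor_def)
  have Qeq: "tp_prod m (Suc s) fs = ?Q" using prod_Suc[OF elfs] .
  obtain c where Qc: "?Q c \<noteq> 0" using fs(3) by (auto simp: tp_zero_def fun_eq_iff)
  have cM: "c \<in> mono_set m s" using prod_elem[of m s fs] Qc by (auto simp: tp_elem_def)
  have i1: "1 \<in> {1..Suc s}" and i2: "Suc s \<in> {1..Suc s}" and ne: "(1::nat) \<noteq> Suc s" using s by auto
  let ?T = "tp_mult m (Suc s) ?h"
  have supp: "(?T ^^ n) ?Q a \<noteq> 0 \<Longrightarrow> a (Suc s) \<le> n" for n a
  proof (induction n arbitrary: a)
    case 0
    then have "a \<in> mono_set m s" using prod_elem[of m s fs] by (auto simp: tp_elem_def)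
    then show ?case by (simp add: mono_set_def)
  next
    case (Suc n)
    from tp_mult_nz[OF Suc.prems[unfolded funpow.simps comp_apply]] obtain u v where
      uv: "(\<lambda>i. u i + v i) = a" and hu: "?h u \<noteq> 0" and v: "(?T ^^ n) ?Q v \<noteq> 0" by blast
    have "u (Suc s) \<le> 1" using tp_add_var_nz[OF hu] by (auto simp: ev_def)
    moreover have "v (Suc s) \<le> n" using Suc.IH[OF v] .
    ultimately show ?case using fun_cong[OF uv, of "Suc s"] by simp
  qed
  have val: "n \<le> m \<Longrightarrow> (?T ^^ n) ?Q (c(Suc s := n)) = ?Q c" for n
  proof (induction n)
    case 0
    have "c(Suc s := 0) = c" using cM by (auto simp: mono_set_def fun_eq_iff)
    then show ?case by simp
  next
    case (Suc n)
    let ?d = "c(Suc s := Suc n)"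
    have dM: "?d \<in> mono_set m (Suc s)" using cM Suc.prems by (auto simp: mono_set_def)
    have "(?T ^^ Suc n) ?Q ?d = tp_mult m (Suc s) (tp_var 1) ((?T ^^ n) ?Q) ?d
        + tp_mult m (Suc s) (tp_var (Suc s)) ((?T ^^ n) ?Q) ?d"
      by (simp only: funpow.simps comp_apply tp_mult_add_left) (simp add: tp_add_def)
    also have "\<dots> = (if ?d 1 \<ge> 1 then (?T ^^ n) ?Q (?d(1 := ?d 1 - 1)) else 0)
         + (if ?d (Suc s) \<ge> 1 then (?T ^^ n) ?Q (?d(Suc s := ?d (Suc s) - 1)) else 0)"
      by (simp only: tp_mult_var[OF i1 m dM] tp_mult_var[OF i2 m dM])
    also have "(if ?d 1 \<ge> 1 then (?T ^^ n) ?Q (?d(1 := ?d 1 - 1)) else 0) = 0"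
    proof -
      have "(?T ^^ n) ?Q (?d(1 := ?d 1 - 1)) = 0"
      proof (rule ccontr)
        assume "(?T ^^ n) ?Q (?d(1 := ?d 1 - 1)) \<noteq> 0"
        from supp[OF this] show False using ne by simp
      qed
      then show ?thesis by simp
    qed
    also have "(if ?d (Suc s) \<ge> 1 then (?T ^^ n) ?Q (?d(Suc s := ?d (Suc s) - 1)) else 0) = ?Q c"
    proof -
      have le: "n \<le> m" using Suc.prems by simp
      have ih: "(?T ^^ n) ?Q (c(Suc s := n)) = ?Q c" using Suc.IH[OF le] by (simp add: fun_upd_def)
      have e: "(?T ^^ n) ?Q (?d(Suc s := ?d (Suc s) - 1)) = (?T ^^ n) ?Q (c(Suc s := n))"
        by (rule arg_cong[of _ _ "(?T ^^ n) ?Q"]) simp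
      have "?d (Suc s) \<ge> 1" by simp
      then show ?thesis using e ih by simp
    qed
    finally show ?case by simp
  qed
  have "tp_prod m (Suc s) (replicate m ?h @ fs) (c(Suc s := m)) = ?Q c"
    unfolding prod_replicate Qeq using val[of m] by simp
  then have "tp_prod m (Suc s) (replicate m ?h @ fs) \<noteq> tp_zero" using Qc by (auto simp: tp_zero_def fun_eq_iff)
  moreover have "\<forall>f\<in>set (replicate m ?h @ fs). zero_divisor m (Suc s) f"
    using fs(2) zd_h[OF s m] elem_Suc diag_Suc by (auto simp: zero_divisor_def)
  ultimately show ?thesis unfolding ZP_def using fs(1)
    by (intro exI[of _ "replicate m ?h @ fs"]) auto
qed

lemma zcl_Suc: "1 \<le> s \<Longrightarrow> 1 \<le> m \<Longrightarrow> zcl m s + m \<le> zcl m (Suc s)"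
  using zcl_ge[OF ZP_Suc[OF _ _ zcl_is_ZP]] by blast

lemma G_Suc: "1 \<le> s \<Longrightarrow> 1 \<le> m \<Longrightarrow> G m (Suc s) \<le> G m s"
  using zcl_Suc[of s m] zcl_le[of m s] by (simp add: G_def)

lemma G_mono:
  assumes "1 \<le> s" "s \<le> t" "1 \<le> m" shows "G m t \<le> G m s"
  using assms(2)
proof (induction t rule: dec_induct)
  case base then show ?case by simp
next
  case (step t) then show ?case using G_Suc[of t m] assms by simp
qed



type_synonym R = "(nat \<Rightarrow>\<^sub>0 nat) \<Rightarrow>\<^sub>0 bit"

definition Tm :: "nat \<Rightarrow> nat \<Rightarrow> R \<Rightarrow> tpoly" where
  "Tm m s p = (\<lambda>a. if a \<in> mono_set m s then Poly_Mapping.lookup p (Abs_poly_mapping a) else 0)"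

lemma mono_fin: "a \<in> mono_set m s \<Longrightarrow> finite {i. a i \<noteq> 0}"
  by (rule finite_subset[of _ "{1..s}"]) (auto simp: mono_set_def)

lemma lookup_Abs_M: "a \<in> mono_set m s \<Longrightarrow> Poly_Mapping.lookup (Abs_poly_mapping a) = a"
  using mono_fin by simp

lemma Abs_inj: "inj_on Abs_poly_mapping (mono_set m s)"
  by (rule inj_onI) (metis lookup_Abs_M)

lemma split_mem:
  assumes c: "c \<in> mono_set m s" and eq: "Abs_poly_mapping c = l + q"
  shows "l \<in> Abs_poly_mapping ` mono_set m s"
proof -
  have lk: "Poly_Mapping.lookup l i + Poly_Mapping.lookup q i = c i" for i
    using arg_cong[OF eq, of "\<lambda>x. Poly_Mapping.lookup x i"] c by (simp add: lookup_add lookup_Abs_M)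
  have "Poly_Mapping.lookup l \<in> mono_set m s"
  proof -
    have "Poly_Mapping.lookup l i \<le> c i" for i using lk[of i] by linarith
    moreover have "c i \<le> m" for i using c unfolding mono_set_def by blast
    moreover have "i \<notin> {1..s} \<Longrightarrow> c i = 0" for i using c unfolding mono_set_def by blast
    ultimately show ?thesis unfolding mono_set_def
    proof (intro CollectI conjI allI impI)
      fix i show "Poly_Mapping.lookup l i \<le> m" using \<open>\<And>i. Poly_Mapping.lookup l i \<le> c i\<close> \<open>\<And>i. c i \<le> m\<close> le_trans by blast
    next
      fix i assume "i \<notin> {1..s}"
      then have "c i = 0" using \<open>\<And>i. i \<notin> {1..s} \<Longrightarrow> c i = 0\<close> by blast
      then show "Poly_Mapping.lookup l i = 0" using lk[of i] by simp
    qed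
  qed
  moreover have "l = Abs_poly_mapping (Poly_Mapping.lookup l)" by simp
  ultimately show ?thesis by blast
qed

lemma T_mult: "Tm m s (p * q) = tp_mult m s (Tm m s p) (Tm m s q)"
proof (rule ext)
  fix c
  show "Tm m s (p * q) c = tp_mult m s (Tm m s p) (Tm m s q) c"
  proof (cases "c \<in> mono_set m s")
    case False
    then show ?thesis by (simp add: Tm_def tp_mult_def)
  next
    case c: True
    let ?U = "Abs_poly_mapping ` mono_set m s"
    let ?C = "Abs_poly_mapping c"
    have finU: "finite ?U" using mono_set_finite by simp
    have inner: "(\<Sum>q'. Poly_Mapping.lookup q q' when ?C = l + q') = (\<Sum>q'\<in>?U. Poly_Mapping.lookup q q' when ?C = l + q')" for l
    proof (rule Sum_any.expand_superset[OF finU], rule subsetI)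
      fix q' assume "q' \<in> {q'. (Poly_Mapping.lookup q q' when ?C = l + q') \<noteq> 0}"
      then have "?C = q' + l" by (auto simp: add.commute when_def split: if_splits)
      from split_mem[OF c this] show "q' \<in> ?U" .
    qed
    have outer: "(\<Sum>l. Poly_Mapping.lookup p l * (\<Sum>q'\<in>?U. Poly_Mapping.lookup q q' when ?C = l + q'))
        = (\<Sum>l\<in>?U. Poly_Mapping.lookup p l * (\<Sum>q'\<in>?U. Poly_Mapping.lookup q q' when ?C = l + q'))"
    proof (rule Sum_any.expand_superset[OF finU], rule subsetI)
      fix l assume "l \<in> {l. Poly_Mapping.lookup p l * (\<Sum>q'\<in>?U. Poly_Mapping.lookup q q' when ?C = l + q') \<noteq> 0}"
      then have "(\<Sum>q'\<in>?U. Poly_Mapping.lookup q q' when ?C = l + q') \<noteq> 0" by auto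
      then obtain q' where "(Poly_Mapping.lookup q q' when ?C = l + q') \<noteq> 0"
        using sum.not_neutral_contains_not_neutral by blast
      then have "?C = l + q'" by (auto simp: when_def split: if_splits)
      from split_mem[OF c this] show "l \<in> ?U" .
    qed
    have "Poly_Mapping.lookup (p * q) ?C = (\<Sum>l\<in>?U. Poly_Mapping.lookup p l * (\<Sum>q'\<in>?U. Poly_Mapping.lookup q q' when ?C = l + q'))"
      by (simp add: lookup_mult inner outer)
    also have "\<dots> = (\<Sum>a\<in>mono_set m s. Poly_Mapping.lookup p (Abs_poly_mapping a) *
         (\<Sum>b\<in>mono_set m s. Poly_Mapping.lookup q (Abs_poly_mapping b) when ?C = Abs_poly_mapping a + Abs_poly_mapping b))"
      by (simp add: sum.reindex[OF Abs_inj])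
    also have "\<dots> = (\<Sum>a\<in>mono_set m s. \<Sum>b\<in>mono_set m s.
         if (\<lambda>i. a i + b i) = c then Tm m s p a * Tm m s q b else 0)"
    proof (rule sum.cong[OF refl])
      fix a assume a: "a \<in> mono_set m s"
      show "Poly_Mapping.lookup p (Abs_poly_mapping a) *
         (\<Sum>b\<in>mono_set m s. Poly_Mapping.lookup q (Abs_poly_mapping b) when ?C = Abs_poly_mapping a + Abs_poly_mapping b)
         = (\<Sum>b\<in>mono_set m s. if (\<lambda>i. a i + b i) = c then Tm m s p a * Tm m s q b else 0)"
        unfolding sum_distrib_left
      proof (rule sum.cong[OF refl])
        fix b assume b: "b \<in> mono_set m s"
        have "(?C = Abs_poly_mapping a + Abs_poly_mapping b) \<longleftrightarrow> ((\<lambda>i. a i + b i) = c)"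
          unfolding poly_mapping_eq_iff using a b c by (auto simp: lookup_add lookup_Abs_M fun_eq_iff)
        then show "Poly_Mapping.lookup p (Abs_poly_mapping a) * (Poly_Mapping.lookup q (Abs_poly_mapping b) when ?C = Abs_poly_mapping a + Abs_poly_mapping b)
          = (if (\<lambda>i. a i + b i) = c then Tm m s p a * Tm m s q b else 0)"
          using a b by (simp add: Tm_def when_def)
      qed
    qed
    finally have X: "Poly_Mapping.lookup (p * q) ?C = (\<Sum>a\<in>mono_set m s. \<Sum>b\<in>mono_set m s.
         if (\<lambda>i. a i + b i) = c then Tm m s p a * Tm m s q b else 0)" .
    show ?thesis using c X by (simp add: tp_mult_def Tm_def[of m s "p * q"])
  qed
qed

lemma T_one: "Tm m s 1 = tp_one"
proof (rule ext)
  fix a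
  show "Tm m s 1 a = tp_one a"
  proof (cases "a \<in> mono_set m s")
    case True
    have "(Abs_poly_mapping a = 0) \<longleftrightarrow> a = (\<lambda>_. 0)"
      unfolding poly_mapping_eq_iff using True by (simp add: lookup_Abs_M fun_eq_iff)
    then show ?thesis using True by (simp add: Tm_def tp_one_def lookup_one)
  next
    case False
    then have "a \<noteq> (\<lambda>_. 0)" using zero_mem by auto
    then show ?thesis using False by (simp add: Tm_def tp_one_def)
  qed
qed

lemma T_prod: "tp_prod m s (map (Tm m s) ps) = Tm m s (prod_list ps)"
  by (induction ps) (simp_all add: tp_prod_Nil tp_prod_Cons T_one T_mult)

definition L :: "nat \<Rightarrow> nat \<Rightarrow> tpoly \<Rightarrow> R" where
  "L m s f = (\<Sum>a\<in>{a\<in>mono_set m s. f a \<noteq> 0}. Poly_Mapping.single (Abs_poly_mapping a) 1)"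

lemma T_L: assumes "tp_elem m s f" shows "Tm m s (L m s f) = f"
proof (rule ext)
  fix a
  show "Tm m s (L m s f) a = f a"
  proof (cases "a \<in> mono_set m s")
    case True
    have "Poly_Mapping.lookup (L m s f) (Abs_poly_mapping a) =
       (\<Sum>b\<in>{a\<in>mono_set m s. f a \<noteq> 0}. if b = a then 1 else 0)"
      unfolding L_def lookup_sum
    proof (rule sum.cong[OF refl])
      fix b assume "b \<in> {a \<in> mono_set m s. f a \<noteq> 0}"
      then have "(Abs_poly_mapping b = Abs_poly_mapping a) \<longleftrightarrow> b = a"
        using True Abs_inj[of m s] by (auto dest: inj_onD)
      then show "Poly_Mapping.lookup (Poly_Mapping.single (Abs_poly_mapping b) 1) (Abs_poly_mapping a) = (if b = a then 1 else 0)"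
        by (simp add: lookup_single when_def)
    qed
    also have "\<dots> = f a" using True mono_set_finite by (simp add: sum.delta')
    finally show ?thesis using True by (simp add: Tm_def)
  next
    case False
    then show ?thesis using assms by (simp add: Tm_def tp_elem_def)
  qed
qed



lemma bit_add_self [simp]: "(y::bit) + y = 0" by (cases y) simp_all

lemma R_two: "(x::R) + x = 0"
  by (rule poly_mapping_eqI) (simp only: lookup_add bit_add_self lookup_zero)

lemma frob2: "((a::R) + b) ^ 2 = a ^ 2 + b ^ 2"
proof -
  have "(a + b) ^ 2 = a ^ 2 + b ^ 2 + (a * b + a * b)" by (simp add: power2_eq_square algebra_simps)
  then show ?thesis by (simp add: R_two)
qed

lemma frob: "((a::R) + b) ^ (2 ^ e) = a ^ (2 ^ e) + b ^ (2 ^ e)"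
proof (induction e)
  case 0 then show ?case by simp
next
  case (Suc e)
  have "(a + b) ^ (2 ^ Suc e) = ((a + b) ^ (2 ^ e)) ^ 2" by (simp add: power_mult[symmetric] mult.commute)
  also have "\<dots> = (a ^ (2 ^ e)) ^ 2 + (b ^ (2 ^ e)) ^ 2" by (simp add: Suc frob2)
  also have "\<dots> = a ^ (2 ^ Suc e) + b ^ (2 ^ Suc e)" by (simp add: power_mult[symmetric] mult.commute)
  finally show ?case .
qed

definition X :: "nat \<Rightarrow> R" where "X i = Poly_Mapping.single (Poly_Mapping.single i 1) 1"

lemma X_pow: "X i ^ n = Poly_Mapping.single (Poly_Mapping.single i n) 1"
proof (induction n)
  case 0 then show ?case by simp
next
  case (Suc n)
  then show ?case by (simp add: X_def mult_single single_add[symmetric] add.commute)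
qed

definition OB :: "nat \<Rightarrow> R \<Rightarrow> bool" where
  "OB m p \<longleftrightarrow> (\<forall>k\<in>Poly_Mapping.keys p. \<exists>i. m < Poly_Mapping.lookup k i)"

lemma OB_zero: "OB m 0" by (simp add: OB_def)

lemma OB_add: "OB m p \<Longrightarrow> OB m q \<Longrightarrow> OB m (p + q)"
  using keys_add[of p q] by (auto simp: OB_def)

lemma OB_mult: "OB m p \<Longrightarrow> OB m (p * q)"
proof (unfold OB_def, intro ballI)
  fix k assume p: "\<forall>k\<in>Poly_Mapping.keys p. \<exists>i. m < Poly_Mapping.lookup k i"
    and k: "k \<in> Poly_Mapping.keys (p * q)"
  from k keys_mult obtain a b where "k = a + b" "a \<in> Poly_Mapping.keys p" by blast
  with p obtain i where "m < Poly_Mapping.lookup a i" "k = a + b" by blast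
  then have "m < Poly_Mapping.lookup k i" by (simp add: lookup_add)
  then show "\<exists>i. m < Poly_Mapping.lookup k i" by blast
qed

lemma OB_mult2: "OB m q \<Longrightarrow> OB m (p * q)"
  using OB_mult[of m q p] by (simp add: mult.commute)

lemma OB_Xpow: "m < n \<Longrightarrow> OB m (X i ^ n)"
proof -
  assume "m < n"
  then have "m < Poly_Mapping.lookup (Poly_Mapping.single i n) i" by simp
  then show ?thesis by (simp add: X_pow OB_def) (rule exI[of _ i], simp)
qed

lemma OB_T: assumes "OB m p" shows "Tm m s p = tp_zero"
proof (rule ext)
  fix a
  show "Tm m s p a = tp_zero a"
  proof (cases "a \<in> mono_set m s")
    case True
    have "Abs_poly_mapping a \<notin> Poly_Mapping.keys p"
    proof
      assume "Abs_poly_mapping a \<in> Poly_Mapping.keys p"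
      with assms obtain i where "m < Poly_Mapping.lookup (Abs_poly_mapping a) i" by (auto simp: OB_def)
      then have "m < a i" using True by (simp add: lookup_Abs_M)
      with True show False by (auto simp: mono_set_def not_le[symmetric])
    qed
    then show ?thesis using True by (simp add: Tm_def tp_zero_def in_keys_iff)
  qed (simp add: Tm_def tp_zero_def)
qed

definition Y :: "nat \<Rightarrow> nat \<Rightarrow> R" where "Y s i = X i + X s"

definition Yk :: "nat \<Rightarrow> (nat \<Rightarrow> nat) \<Rightarrow> R" where "Yk s k = (\<Prod>i\<in>{1..<s}. Y s i ^ k i)"

lemma Yk_0: "Yk s (\<lambda>_. 0) = 1" by (simp add: Yk_def)

lemma Yk_add: "Yk s (\<lambda>i. k i + k' i) = Yk s k * Yk s k'"
  by (simp add: Yk_def power_add prod.distrib)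

inductive W :: "nat \<Rightarrow> nat \<Rightarrow> nat \<Rightarrow> R \<Rightarrow> bool" for m s where
  ob: "OB m p \<Longrightarrow> W m s N p"
| gen: "N \<le> sum k {1..<s} \<Longrightarrow> W m s N (Yk s k * r)"
| add: "W m s N p \<Longrightarrow> W m s N q \<Longrightarrow> W m s N (p + q)"

lemma W_zero: "W m s N 0" by (rule ob) (rule OB_zero)

lemma W_any0: "W m s 0 r"
  using W.gen[where k="\<lambda>_. 0" and N=0 and r=r and m=m and s=s] by (simp add: Yk_0)

lemma W_mult: "W m s N p \<Longrightarrow> W m s N' q \<Longrightarrow> W m s (N + N') (p * q)"
proof (induction arbitrary: q rule: W.induct)
  case (ob p N)
  then show ?case by (intro W.ob OB_mult)
next
  case (add N p1 p2)
  then show ?case by (simp add: distrib_right W.add)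
next
  case (gen N k r)
  have hN: "N \<le> sum k {1..<s}" by (rule gen.hyps)
  from gen.prems show ?case
  proof (induction rule: W.induct)
    case (ob q N')
    then show ?case by (intro W.ob OB_mult2)
  next
    case (add N' q1 q2)
    then show ?case by (simp add: distrib_left W.add)
  next
    case (gen N' k' r')
    have "Yk s k * r * (Yk s k' * r') = Yk s (\<lambda>i. k i + k' i) * (r * r')"
      by (simp add: Yk_add algebra_simps)
    moreover have "N + N' \<le> sum (\<lambda>i. k i + k' i) {1..<s}"
      using hN \<open>N' \<le> sum k' {1..<s}\<close> by (simp add: sum.distrib)
    ultimately show ?case using W.gen by metis
  qed
qed

lemma W_ideal: "W m s N p \<Longrightarrow> W m s N (r * p)"
  using W_mult[OF W_any0[of m s r]] by simp

lemma W_sum: "finite A \<Longrightarrow> (\<And>a. a \<in> A \<Longrightarrow> W m s N (g a)) \<Longrightarrow> W m s N (sum g A)"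
  by (induction A rule: finite_induct) (simp_all add: W_zero W.add)

lemma W_prod: "(\<forall>p\<in>set ps. W m s 1 p) \<Longrightarrow> W m s (length ps) (prod_list ps)"
proof (induction ps)
  case Nil then show ?case using W_any0 by simp
next
  case (Cons p ps)
  then have "W m s (1 + length ps) (p * prod_list ps)" by (intro W_mult) auto
  then show ?case by simp
qed

lemma W_vanish:
  assumes e: "m + 1 = 2 ^ e"
  shows "W m s N p \<Longrightarrow> (s - 1) * m < N \<Longrightarrow> OB m p"
proof (induction rule: W.induct)
  case (ob p N) then show ?case by simp
next
  case (add N p q) then show ?case by (blast intro: OB_add)
next
  case (gen N' k r)
  have hN: "N' \<le> sum k {1..<s}" by (rule gen.hyps)
  have N: "(s - 1) * m < N'" by (rule gen.prems)
  obtain i where i: "i \<in> {1..<s}" "m < k i"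
  proof (rule ccontr)
    assume "\<not> thesis"
    with that have "\<forall>i\<in>{1..<s}. k i \<le> m" by (meson not_le)
    then have "sum k {1..<s} \<le> card {1..<s} * m" using sum_bounded_above[of "{1..<s}" k m] by simp
    then show False using hN N by simp
  qed
  have ki: "k i = 2 ^ e + (k i - 2 ^ e)" using i e by simp
  have "Yk s k = Y s i ^ k i * (\<Prod>j\<in>{1..<s} - {i}. Y s j ^ k j)"
    unfolding Yk_def using i by (simp add: prod.remove)
  also have "\<dots> = Y s i ^ (2 ^ e) * (Y s i ^ (k i - 2 ^ e) * (\<Prod>j\<in>{1..<s} - {i}. Y s j ^ k j))"
    by (subst ki) (simp add: power_add mult.assoc)
  finally have Yeq: "Yk s k * r = Y s i ^ (2 ^ e) * (Y s i ^ (k i - 2 ^ e) * (\<Prod>j\<in>{1..<s} - {i}. Y s j ^ k j) * r)"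
    by (simp add: mult.assoc)
  have "OB m (Y s i ^ (2 ^ e))"
    unfolding Y_def frob using e by (intro OB_add OB_Xpow) auto
  then show ?case unfolding Yeq by (rule OB_mult)
qed



definition Xm :: "(nat \<Rightarrow> nat) \<Rightarrow> R" where "Xm a = Poly_Mapping.single (Abs_poly_mapping a) 1"

lemma W_XY:
  assumes i: "i \<in> {1..s}"
  shows "W m s 1 (X i + X s)"
proof (cases "i = s")
  case True
  then show ?thesis by (simp add: R_two W_zero)
next
  case False
  then have i': "i \<in> {1..<s}" using i by auto
  have "Yk s (ev i) = (\<Prod>j\<in>{1..<s}. Y s j ^ ev i j)" by (simp add: Yk_def)
  also have "\<dots> = Y s i ^ ev i i * (\<Prod>j\<in>{1..<s} - {i}. Y s j ^ ev i j)"
    using i' by (simp add: prod.remove)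
  also have "(\<Prod>j\<in>{1..<s} - {i}. Y s j ^ ev i j) = 1"
    by (rule prod.neutral) (simp add: ev_def)
  finally have Yi: "Yk s (ev i) = Y s i" by (simp add: ev_def)
  have "sum (ev i) {1..<s} = 1" using i' by (simp add: ev_def)
  then have "W m s 1 (Yk s (ev i) * 1)" by (intro W.gen) simp
  then show ?thesis by (simp add: Yi Y_def)
qed

lemma Xm_cong:
  shows "\<forall>a\<in>mono_set m s. deg s a = n \<longrightarrow> W m s 1 (Xm a + X s ^ n)"
proof (induction n)
  case 0
  show ?case
  proof (intro ballI impI)
    fix a assume "a \<in> mono_set m s" "deg s a = 0"
    then have "a = (\<lambda>_. 0)" by (rule deg_zero)
    then show "W m s 1 (Xm a + X s ^ 0)" by (simp add: Xm_def R_two W_zero)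
  qed
next
  case (Suc n)
  show ?case
  proof (intro ballI impI)
    fix a assume a: "a \<in> mono_set m s" and da: "deg s a = Suc n"
    obtain i where i: "i \<in> {1..s}" "a i \<noteq> 0"
    proof (rule ccontr)
      assume "\<not> thesis"
      with that have "\<forall>i\<in>{1..s}. a i = 0" by blast
      then have "deg s a = 0" by simp
      with da show False by simp
    qed
    let ?a' = "a(i := a i - 1)"
    have a': "?a' \<in> mono_set m s" using a i unfolding mono_set_def by (auto intro: le_trans[OF diff_le_self])
    have "deg s a = a i + sum a ({1..s} - {i})" using i by (simp add: sum.remove)
    moreover have "deg s ?a' = (a i - 1) + sum ?a' ({1..s} - {i})" using i by (simp add: sum.remove)
    moreover have "sum ?a' ({1..s} - {i}) = sum a ({1..s} - {i})" by (rule sum.cong) auto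
    ultimately have da': "deg s ?a' = n" using da i by simp
    have IH: "W m s 1 (Xm ?a' + X s ^ n)" using Suc.IH a' da' by blast
    have "Poly_Mapping.single i 1 + Abs_poly_mapping ?a' = Abs_poly_mapping a"
      by (rule poly_mapping_eqI) (use a a' i in \<open>simp add: lookup_add lookup_single lookup_Abs_M when_def\<close>)
    then have Xa: "Xm a = X i * Xm ?a'" by (simp add: Xm_def X_def mult_single)
    have "X i * (Xm ?a' + X s ^ n) + (X i + X s) * X s ^ n
        = X i * Xm ?a' + X s * X s ^ n + (X i * X s ^ n + X i * X s ^ n)"
      by (simp add: algebra_simps)
    also have "\<dots> = Xm a + X s ^ Suc n" by (simp add: R_two Xa)
    finally have eq: "Xm a + X s ^ Suc n = X i * (Xm ?a' + X s ^ n) + X s ^ n * (X i + X s)"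
      by (simp add: mult.commute)
    show "W m s 1 (Xm a + X s ^ Suc n)"
      unfolding eq by (intro W.add W_ideal IH W_XY i)
  qed
qed

lemma zd_W:
  assumes zd: "zero_divisor m s f"
  shows "W m s 1 (L m s f)"
proof -
  let ?A = "{a \<in> mono_set m s. f a \<noteq> 0}"
  have finA: "finite ?A" using mono_set_finite by simp
  have "L m s f = (\<Sum>a\<in>?A. Xm a)" by (simp add: L_def Xm_def)
  also have "\<dots> = (\<Sum>a\<in>?A. Xm a + X s ^ deg s a) + (\<Sum>a\<in>?A. X s ^ deg s a)"
    by (simp add: sum.distrib add.assoc R_two)
  finally have Leq: "L m s f = (\<Sum>a\<in>?A. Xm a + X s ^ deg s a) + (\<Sum>a\<in>?A. X s ^ deg s a)" .
  have W1: "W m s 1 (\<Sum>a\<in>?A. Xm a + X s ^ deg s a)"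
    by (rule W_sum[OF finA]) (use Xm_cong in blast)
  have "OB m (\<Sum>a\<in>?A. X s ^ deg s a)"
  proof (unfold OB_def, intro ballI)
    fix k assume k: "k \<in> Poly_Mapping.keys (\<Sum>a\<in>?A. X s ^ deg s a)"
    have "k \<in> (\<Union>a\<in>?A. Poly_Mapping.keys (X s ^ deg s a))" by (rule subsetD[OF keys_sum k])
    then obtain a0 where "a0 \<in> ?A" "k \<in> Poly_Mapping.keys (X s ^ deg s a0)"
      by (rule UN_E)
    then have k0: "k = Poly_Mapping.single s (deg s a0)" by (simp add: X_pow)
    let ?d = "deg s a0"
    have "m < ?d"
    proof (rule ccontr)
      assume "\<not> m < ?d"
      then have dm: "?d \<le> m" by simp
      have "Poly_Mapping.lookup (\<Sum>a\<in>?A. X s ^ deg s a) k = (\<Sum>a\<in>?A. if deg s a = ?d then 1 else 0)"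
        unfolding lookup_sum k0 X_pow
      proof (rule sum.cong[OF refl])
        fix a
        have "(Poly_Mapping.single s (deg s a) = Poly_Mapping.single s ?d) \<longleftrightarrow> deg s a = ?d"
          by (metis lookup_single_eq)
        then show "Poly_Mapping.lookup (Poly_Mapping.single (Poly_Mapping.single s (deg s a)) 1) (Poly_Mapping.single s ?d)
          = (if deg s a = ?d then 1 else 0)" by (simp add: lookup_single when_def)
      qed
      also have "\<dots> = (\<Sum>a\<in>?A. if deg s a = ?d then f a else 0)"
        by (rule sum.cong) auto
      also have "\<dots> = (\<Sum>a\<in>mono_set m s. if deg s a = ?d then f a else 0)"
        by (rule sum.mono_neutral_left) (use mono_set_finite in auto)
      also have "\<dots> = diag m s f ?d" using dm by (simp add: diag_def)
      also have "\<dots> = 0" using zd by (simp add: zero_divisor_def)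
      finally show False using k by (simp add: in_keys_iff)
    qed
    then show "\<exists>i. m < Poly_Mapping.lookup k i" using k0 by (intro exI[of _ s]) simp
  qed
  then show ?thesis unfolding Leq by (intro W.add W1 W.ob)
qed

lemma prod_zero:
  assumes e: "m + 1 = 2 ^ e" and zd: "\<forall>f\<in>set fs. zero_divisor m s f" and len: "(s - 1) * m < length fs"
  shows "tp_prod m s fs = tp_zero"
proof -
  have "map (Tm m s) (map (L m s) fs) = fs"
    using zd by (induction fs) (auto simp: T_L zero_divisor_def)
  then have "tp_prod m s fs = Tm m s (prod_list (map (L m s) fs))"
    using T_prod[of m s "map (L m s) fs"] by simp
  moreover have "W m s (length fs) (prod_list (map (L m s) fs))"
    using W_prod[of "map (L m s) fs" m s] zd zd_W by simp
  then have "OB m (prod_list (map (L m s) fs))" using W_vanish[OF e] len by blast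
  ultimately show ?thesis using OB_T by simp
qed

lemma G_lower:
  assumes e: "m + 1 = 2 ^ e" and s: "1 \<le> s"
  shows "m \<le> G m s"
proof -
  have "zcl m s \<le> (s - 1) * m"
  proof (rule ccontr)
    assume "\<not> zcl m s \<le> (s - 1) * m"
    moreover obtain fs where "length fs = zcl m s" "\<forall>f\<in>set fs. zero_divisor m s f" "tp_prod m s fs \<noteq> tp_zero"
      using zcl_is_ZP[of m s] by (auto simp: ZP_def)
    ultimately show False using prod_zero[OF e] by simp
  qed
  then have "zcl m s + m \<le> s * m" using s by (cases s) auto
  then show ?thesis by (simp add: G_def)
qed



lemma zd_lin:
  assumes i: "i \<in> {1..s}" and j: "j \<in> {1..s}" and ij: "i \<noteq> j" and m: "1 \<le> m"
  shows "zero_divisor m s (tp_add (tp_var i) (tp_var j))"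
proof -
  let ?h = "tp_add (tp_var i) (tp_var j)"
  have el: "tp_elem m s ?h"
    unfolding tp_elem_def using tp_add_var_nz ev_mem[OF i m] ev_mem[OF j m] by blast
  have "diag m s ?h d = 0" for d
  proof -
    have ne: "ev i \<noteq> ev j" using ij by (auto simp: ev_def fun_eq_iff)
    have pt: "(if deg s x = d then ?h x else 0) = (if x = ev i then (if deg s x = d then 1 else 0) else 0)
         + (if x = ev j then (if deg s x = d then 1 else 0) else 0)" for x
      unfolding tp_add_def tp_var_eq using ne by auto
    have "(\<Sum>a\<in>mono_set m s. if deg s a = d then ?h a else 0)
      = (\<Sum>a\<in>mono_set m s. if a = ev i then (if deg s a = d then 1 else 0) else 0)
      + (\<Sum>a\<in>mono_set m s. if a = ev j then (if deg s a = d then 1 else 0) else 0)"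
      by (simp only: pt sum.distrib)
    also have "\<dots> = (if d = 1 then 1 else 0) + (if d = 1 then 1 else 0)"
      using mono_set_finite ev_mem[OF i m] ev_mem[OF j m] deg_ev[OF i] deg_ev[OF j] by auto
    also have "\<dots> = 0" by simp
    finally have X: "(\<Sum>a\<in>mono_set m s. if deg s a = d then ?h a else 0) = 0" .
    show ?thesis unfolding diag_def by (subst X) simp
  qed
  then show ?thesis using el by (simp add: zero_divisor_def fun_eq_iff)
qed

lemma T_var: assumes i: "i \<in> {1..s}" and m: "1 \<le> m" shows "Tm m s (X i) = tp_var i"
proof (rule ext)
  fix a
  show "Tm m s (X i) a = tp_var i a"
  proof (cases "a \<in> mono_set m s")
    case True
    have "(Poly_Mapping.single i 1 = Abs_poly_mapping a) \<longleftrightarrow> a = ev i"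
      unfolding poly_mapping_eq_iff using True by (auto simp: lookup_Abs_M lookup_single when_def ev_def fun_eq_iff)
    then show ?thesis using True by (simp add: Tm_def X_def tp_var_eq lookup_single when_def)
  next
    case False
    then have "a \<noteq> ev i" using ev_mem[OF i m] by auto
    then show ?thesis using False by (simp add: Tm_def tp_var_eq)
  qed
qed

lemma T_add: "Tm m s (p + q) = tp_add (Tm m s p) (Tm m s q)"
  by (auto simp: Tm_def tp_add_def lookup_add fun_eq_iff)

lemma T_pow: "tp_pow m s (Tm m s p) n = Tm m s (p ^ n)"
  by (induction n) (simp_all add: tp_pow_0 tp_pow_Suc T_one T_mult)

lemma prod_list_concat_rep: "prod_list (concat (map (\<lambda>i. replicate k (f i)) xs)) = prod_list (map (\<lambda>i. (f i :: R) ^ k) xs)"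
  by (induction xs) (simp_all add: prod_list_replicate)

lemma length_concat_rep: "length (concat (map (\<lambda>i. replicate k (f i)) xs)) = length xs * k"
  by (induction xs) simp_all

lemma ZP_main:
  assumes m: "1 \<le> m" and s: "2 \<le> \<sigma>"
    and nz: "tp_prod m \<sigma> (map (\<lambda>i. tp_pow m \<sigma> (tp_add (tp_var i) (tp_var \<sigma>)) k) [1..<\<sigma>]) \<noteq> tp_zero"
  shows "ZP m \<sigma> ((\<sigma> - 1) * k)"
proof -
  let ?ES = "concat (map (\<lambda>i. replicate k (tp_add (tp_var i) (tp_var \<sigma>))) [1..<\<sigma>])"
  let ?EP = "concat (map (\<lambda>i. replicate k (X i + X \<sigma>)) [1..<\<sigma>])"
  have hT: "tp_add (tp_var i) (tp_var \<sigma>) = Tm m \<sigma> (X i + X \<sigma>)" if "i \<in> {1..<\<sigma>}" for i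
    using that m s by (simp add: T_add T_var)
  have "?ES = map (Tm m \<sigma>) ?EP"
    unfolding map_concat map_map
  proof (rule arg_cong[where f=concat], rule map_cong[OF refl])
    fix x assume "x \<in> set [1..<\<sigma>]"
    then have "x \<in> {1..<\<sigma>}" by simp
    then show "replicate k (tp_add (tp_var x) (tp_var \<sigma>)) = (map (Tm m \<sigma>) \<circ> (\<lambda>i. replicate k (X i + X \<sigma>))) x"
      by (simp add: hT)
  qed
  then have "tp_prod m \<sigma> ?ES = Tm m \<sigma> (prod_list (map (\<lambda>i. (X i + X \<sigma>) ^ k) [1..<\<sigma>]))"
    by (simp add: T_prod prod_list_concat_rep)
  also have "\<dots> = tp_prod m \<sigma> (map (\<lambda>i. tp_pow m \<sigma> (tp_add (tp_var i) (tp_var \<sigma>)) k) [1..<\<sigma>])"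
  proof -
    have mp: "map (\<lambda>i. tp_pow m \<sigma> (tp_add (tp_var i) (tp_var \<sigma>)) k) [1..<\<sigma>]
        = map (Tm m \<sigma>) (map (\<lambda>i. (X i + X \<sigma>) ^ k) [1..<\<sigma>])"
    proof (unfold map_map, rule map_cong[OF refl])
      fix x assume "x \<in> set [1..<\<sigma>]"
      then have "x \<in> {1..<\<sigma>}" by simp
      then show "tp_pow m \<sigma> (tp_add (tp_var x) (tp_var \<sigma>)) k = (Tm m \<sigma> \<circ> (\<lambda>i. (X i + X \<sigma>) ^ k)) x"
        by (simp add: hT T_pow)
    qed
    show ?thesis by (simp only: mp T_prod)
  qed
  finally have eq: "tp_prod m \<sigma> ?ES = tp_prod m \<sigma> (map (\<lambda>i. tp_pow m \<sigma> (tp_add (tp_var i) (tp_var \<sigma>)) k) [1..<\<sigma>])" .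
  have "\<forall>f\<in>set ?ES. zero_divisor m \<sigma> f"
    using m s by (auto intro!: zd_lin)
  moreover have "length ?ES = (\<sigma> - 1) * k" by (simp add: length_concat_rep)
  ultimately show ?thesis unfolding ZP_def using nz eq by metis
qed

theorem theorem4p5:
  fixes m e :: nat
  assumes "m \<ge> 1"
    and "m mod 2 ^ (e + 1) = 2 ^ e - 1"
  shows "G_stable m \<le> 2 ^ e - 1
    \<and> ((even m \<or> m = 2 ^ e - 1) \<longrightarrow> G_stable m = 2 ^ e - 1)
    \<and> (\<forall>s. s \<ge> 2 \<and> real s \<ge> real (m + 1) / 2 ^ e \<longrightarrow> G m s \<le> 2 ^ e - 1)
    \<and> (m > 2 ^ e - 1 \<longrightarrow>
           (let \<sigma> = (m + 1) div 2 ^ e;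
                fs = map (\<lambda>i. tp_pow m \<sigma> (tp_add (tp_var i) (tp_var \<sigma>)) (m + 2 ^ e)) [1..<\<sigma>]
            in 2 ^ e dvd (m + 1) \<and> \<sigma> > 2
               \<and> (\<forall>f\<in>set fs. zero_divisor m \<sigma> f)
               \<and> tp_prod m \<sigma> fs \<noteq> tp_zero))"
proof -
  have m1: "1 \<le> m" by (rule assms(1))
  define P :: nat where "P = 2 ^ e"
  have P1: "1 \<le> P" by (simp add: P_def)
  define q where "q = m div 2 ^ (e + 1)"
  define t where "t = 2 * q"
  have "m = q * 2 ^ (e + 1) + m mod 2 ^ (e + 1)" unfolding q_def by (rule div_mult_mod_eq[symmetric])
  then have mt: "m = t * P + (P - 1)" using assms(2) by (simp add: t_def P_def)
  have m1P: "m + 1 = (t + 1) * P" using mt P1 by (simp add: algebra_simps)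
  define \<sigma> where "\<sigma> = (m + 1) div 2 ^ e"
  have sig: "\<sigma> = t + 1" using m1P P1 by (simp add: \<sigma>_def P_def[symmetric])
  have oddsig: "odd \<sigma>" by (simp add: sig t_def)
  have dvd: "2 ^ e dvd (m + 1)" using m1P by (simp add: P_def)
  have msig: "m + 1 = \<sigma> * 2 ^ e" using m1P sig by (simp add: P_def)
  have main: "(\<forall>f\<in>set (map (\<lambda>i. tp_pow m \<sigma> (tp_add (tp_var i) (tp_var \<sigma>)) (m + 2 ^ e)) [1..<\<sigma>]).
                 zero_divisor m \<sigma> f)
        \<and> tp_prod m \<sigma> (map (\<lambda>i. tp_pow m \<sigma> (tp_add (tp_var i) (tp_var \<sigma>)) (m + 2 ^ e)) [1..<\<sigma>]) \<noteq> tp_zero"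
    if big: "m > 2 ^ e - 1"
  proof
    show "\<forall>f\<in>set (map (\<lambda>i. tp_pow m \<sigma> (tp_add (tp_var i) (tp_var \<sigma>)) (m + 2 ^ e)) [1..<\<sigma>]).
                 zero_divisor m \<sigma> f"
      using sig by (auto intro!: zd_pow)
    have Pm: "2 ^ e \<le> m" using big by simp
    have "tp_prod m \<sigma> (map (\<lambda>i. tp_pow m \<sigma> (tp_add (tp_var i) (tp_var \<sigma>)) (m + 2 ^ e)) [1..<\<sigma>])
       (\<lambda>t. if 1 \<le> t \<and> t < \<sigma> then m else if t = \<sigma> then (\<sigma> - 1) * 2 ^ e else 0) = 1"
      by (rule main_prod[OF msig Pm oddsig]) (use sig in auto)
    then show "tp_prod m \<sigma> (map (\<lambda>i. tp_pow m \<sigma> (tp_add (tp_var i) (tp_var \<sigma>)) (m + 2 ^ e)) [1..<\<sigma>]) \<noteq> tp_zero"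
      by (auto simp: tp_zero_def fun_eq_iff)
  qed
  have p3: "G m s \<le> P - 1" if s: "\<sigma> \<le> s" "1 \<le> s" for s
  proof (cases "m > 2 ^ e - 1")
    case True
    have tpos: "1 \<le> t"
    proof (rule ccontr)
      assume "\<not> 1 \<le> t"
      then have "t = 0" by simp
      then show False using True mt by (simp add: P_def)
    qed
    let ?fs = "map (\<lambda>i. tp_pow m \<sigma> (tp_add (tp_var i) (tp_var \<sigma>)) (m + 2 ^ e)) [1..<\<sigma>]"
    have "ZP m \<sigma> ((\<sigma> - 1) * (m + 2 ^ e))" by (rule ZP_main) (use m1 sig tpos main[OF True] in auto)
    then have z: "t * (m + P) \<le> zcl m \<sigma>" using zcl_ge sig by (simp add: P_def)
    have "G m \<sigma> = \<sigma> * m - zcl m \<sigma>" by (simp add: G_def)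
    also have "\<dots> \<le> (t + 1) * m - t * (m + P)" using z sig by simp
    also have "\<dots> = P - 1"
    proof -
      have e1: "(t + 1) * m = t * m + m" by (simp add: algebra_simps)
      have e2: "t * (m + P) = t * m + t * P" by (simp add: algebra_simps)
      show ?thesis using e1 e2 mt by linarith
    qed
    finally have "G m \<sigma> \<le> P - 1" .
    moreover have "G m s \<le> G m \<sigma>" by (rule G_mono) (use sig s m1 in auto)
    ultimately show ?thesis by simp
  next
    case False
    have "t = 0"
    proof (rule ccontr)
      assume "t \<noteq> 0"
      then have "P \<le> t * P" by simp
      then have "P \<le> m" using mt by linarith
      then show False using False P1 unfolding P_def by linarith
    qed
    then have "m = P - 1" using mt by simp
    moreover have "G m 1 \<le> m" by (simp add: G_def)
    moreover have "G m s \<le> G m 1" by (rule G_mono) (use s m1 in auto)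
    ultimately show ?thesis by simp
  qed
  have part3: "\<forall>s. s \<ge> 2 \<and> real s \<ge> real (m + 1) / 2 ^ e \<longrightarrow> G m s \<le> 2 ^ e - 1"
  proof (intro allI impI)
    fix s assume h: "s \<ge> 2 \<and> real s \<ge> real (m + 1) / 2 ^ e"
    have "real (m + 1) / 2 ^ e = real \<sigma>" using msig by simp
    then have "\<sigma> \<le> s" using h by simp
    then show "G m s \<le> 2 ^ e - 1" using p3 h by (simp add: P_def)
  qed
  define g where "g = (LEAST y. \<exists>s\<ge>1. G m s = y)"
  obtain s0 where s0: "1 \<le> s0" "G m s0 = g"
    using LeastI_ex[of "\<lambda>y. \<exists>s\<ge>1. G m s = y"] by (auto simp: g_def)
  have stab: "G m s = g" if "s0 \<le> s" for s
  proof -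
    have "G m s \<le> G m s0" by (rule G_mono) (use s0 that m1 in auto)
    moreover have "g \<le> G m s" unfolding g_def
    proof (rule Least_le)
      show "\<exists>s'\<ge>1. G m s' = G m s" using s0 that by (intro exI[of _ s]) auto
    qed
    ultimately show ?thesis using s0 by simp
  qed
  have Gs: "G_stable m = g"
    unfolding G_stable_def
  proof (rule the_equality)
    show "\<forall>\<^sub>F s in sequentially. G m s = g" unfolding eventually_sequentially using stab by blast
  next
    fix g' assume "\<forall>\<^sub>F s in sequentially. G m s = g'"
    then obtain N where N: "\<And>n. N \<le> n \<Longrightarrow> G m n = g'" unfolding eventually_sequentially by blast
    have "G m (max N s0) = g'" by (rule N) simp
    moreover have "G m (max N s0) = g" by (rule stab) simp
    ultimately show "g' = g" by simp
  qed
  have gle: "g \<le> 2 ^ e - 1"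
  proof -
    have "G m (max s0 \<sigma>) = g" by (rule stab) simp
    moreover have "G m (max s0 \<sigma>) \<le> P - 1" by (rule p3) (use s0 in auto)
    ultimately show ?thesis by (simp add: P_def)
  qed
  have part2: "(even m \<or> m = 2 ^ e - 1) \<longrightarrow> g = 2 ^ e - 1"
  proof
    assume h: "even m \<or> m = 2 ^ e - 1"
    show "g = 2 ^ e - 1"
    proof (cases "m = 2 ^ e - 1")
      case True
      then have "m + 1 = 2 ^ e" using P1 by (simp add: P_def)
      then have "m \<le> G m s0" using G_lower s0 by blast
      then show ?thesis using gle s0 True by simp
    next
      case False
      then have ev: "even m" using h by simp
      have "e = 0"
      proof (rule ccontr)
        assume "e \<noteq> 0"
        have "m mod 2 ^ (e + 1) mod 2 = m mod 2" by (rule mod_mod_cancel) simp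
        then have "even (2 ^ e - 1 :: nat)" using ev assms(2) by (simp add: even_iff_mod_2_eq_zero)
        moreover have "even (2 ^ e :: nat)" using \<open>e \<noteq> 0\<close> by simp
        ultimately show False using P1 by (simp add: P_def)
      qed
      then show ?thesis using gle by simp
    qed
  qed
  have part4: "m > 2 ^ e - 1 \<longrightarrow>
           (let \<sigma> = (m + 1) div 2 ^ e;
                fs = map (\<lambda>i. tp_pow m \<sigma> (tp_add (tp_var i) (tp_var \<sigma>)) (m + 2 ^ e)) [1..<\<sigma>]
            in 2 ^ e dvd (m + 1) \<and> \<sigma> > 2
               \<and> (\<forall>f\<in>set fs. zero_divisor m \<sigma> f)
               \<and> tp_prod m \<sigma> fs \<noteq> tp_zero)"
  proof
    assume big: "m > 2 ^ e - 1"
    have "t \<noteq> 0"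
    proof
      assume "t = 0"
      then show False using big mt by (simp add: P_def)
    qed
    then have "\<sigma> > 2" using sig oddsig by (auto simp: t_def)
    then show "let \<sigma> = (m + 1) div 2 ^ e;
                fs = map (\<lambda>i. tp_pow m \<sigma> (tp_add (tp_var i) (tp_var \<sigma>)) (m + 2 ^ e)) [1..<\<sigma>]
            in 2 ^ e dvd (m + 1) \<and> \<sigma> > 2
               \<and> (\<forall>f\<in>set fs. zero_divisor m \<sigma> f)
               \<and> tp_prod m \<sigma> fs \<noteq> tp_zero"
      unfolding Let_def \<sigma>_def[symmetric] using dvd main[OF big] by simp
  qed
  show ?thesis using gle part2 part3 part4 unfolding Gs by blast
qed


end
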